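(* Let $0<p\leq1$, let $G=(V,E)$ be any graph with $V=\{1,\dots,n\}$, and let $M=M(G)$. Then $\lambda_1(M)\geq\vartheta_2(G)$.
   Context: $M(G)=(m_{ij})$ is the $n\times n$ matrix with $m_{ii}=1$, and for $i\neq j$: $m_{ij}=1$ if $\{i,j\}\notin E$ and $m_{ij}=(p-1)/p$ if $\{i,j\}\in E$; $\lambda_1(M)$ is its largest eigenvalue. For a graph $H$ and real $k>1$, a rigid vector $k$-coloring of $H$ is a tuple of unit vectors $(u_1,\dots,u_n)$ in $\mathbb R^n$ with $\langle u_i,u_j\rangle=-1/(k-1)$ for all edges $\{i,j\}$ of $H$ and $\langle u_i,u_j\rangle\geq-1/(k-1)$ for all non-adjacent $i\neq j$; $\bar\vartheta_2(H)$ is the infimum of such $k$, and $\vartheta_2(G)=\bar\vartheta_2(\bar G)$ with $\bar G$ the complement of $G$. *)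

theory Defs
  imports "HOL-Analysis.Analysis"
begin

text \<open>Graphs on the vertex set 'n (a finite type with CARD('n) = n elements,
 playing the role of {1..n}), given by a symmetric irreflexive edge relation.\<close>

definition simple_graph :: "('n \<Rightarrow> 'n \<Rightarrow> bool) \<Rightarrow> bool" where
  "simple_graph E \<longleftrightarrow> (\<forall>i j. E i j \<longrightarrow> E j i) \<and> (\<forall>i. \<not> E i i)"

definition complement_graph :: "('n \<Rightarrow> 'n \<Rightarrow> bool) \<Rightarrow> 'n \<Rightarrow> 'n \<Rightarrow> bool" where
  "complement_graph E = (\<lambda>i j. i \<noteq> j \<and> \<not> E i j)"

definition M_mat :: "real \<Rightarrow> ('n::finite \<Rightarrow> 'n \<Rightarrow> bool) \<Rightarrow> real^'n^'n" where
  "M_mat p E = (\<chi> i j. if i = j then 1 else if E i j then (p - 1) / p else 1)"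

definition real_eigenvalues :: "real^'n^'n \<Rightarrow> real set" where
  "real_eigenvalues A = {l. \<exists>v. v \<noteq> 0 \<and> A *v v = l *\<^sub>R v}"

definition lambda1 :: "real^'n^'n \<Rightarrow> real" where
  "lambda1 A = Max (real_eigenvalues A)"

definition rigid_vector_coloring ::
    "('n::finite \<Rightarrow> 'n \<Rightarrow> bool) \<Rightarrow> real \<Rightarrow> ('n \<Rightarrow> real^'n) \<Rightarrow> bool" where
  "rigid_vector_coloring H k u \<longleftrightarrow>
     (\<forall>i. norm (u i) = 1) \<and>
     (\<forall>i j. i \<noteq> j \<longrightarrow> H i j \<longrightarrow> u i \<bullet> u j = - 1 / (k - 1)) \<and>
     (\<forall>i j. i \<noteq> j \<longrightarrow> \<not> H i j \<longrightarrow> u i \<bullet> u j \<ge> - 1 / (k - 1))"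

definition theta2_bar :: "('n::finite \<Rightarrow> 'n \<Rightarrow> bool) \<Rightarrow> real" where
  "theta2_bar H = Inf {k. k > 1 \<and> (\<exists>u. rigid_vector_coloring H k u)}"

definition theta2 :: "('n::finite \<Rightarrow> 'n \<Rightarrow> bool) \<Rightarrow> real" where
  "theta2 E = theta2_bar (complement_graph E)"

end

theory Submission
  imports Defs
begin

lemma sym_inner:
  fixes A :: "real^'n^'n"
  assumes "transpose A = A"
  shows "x \<bullet> (A *v y) = (A *v x) \<bullet> y"
  by (metis assms dot_lmul_matrix vector_transpose_matrix)

lemma quad_le0:
  fixes a b :: real
  assumes "\<And>t. 2 * t * a + t^2 * b \<le> 0" and "a \<ge> 0"
  shows "a = 0"
proof (rule ccontr)
  assume "a \<noteq> 0" then have a: "a > 0" using assms by simp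
  define t where "t = a / (\<bar>b\<bar> + 1)"
  have t: "t > 0" using a by (simp add: t_def)
  have "t * (\<bar>b\<bar> + 1) = a" unfolding t_def by simp
  then have tb: "t * \<bar>b\<bar> < a" using t by (simp add: algebra_simps)
  have "t^2 * b \<ge> t^2 * (- \<bar>b\<bar>)" by (rule mult_left_mono) simp_all
  also have "t^2 * (- \<bar>b\<bar>) = - (t * (t * \<bar>b\<bar>))" by (simp add: power2_eq_square)
  finally have "t^2 * b \<ge> - (t * (t * \<bar>b\<bar>))" .
  moreover have "t * (t * \<bar>b\<bar>) < t * a" using tb t by simp
  moreover have "t * a > 0" using t a by simp
  ultimately have "2 * t * a + t^2 * b > 0" by linarith
  with assms(1)[of t] show False by simp
qed
lemma eig_in_subspace:
  fixes A :: "real^'n^'n"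
  assumes sym: "transpose A = A" and W: "subspace W" and inv: "\<And>x. x \<in> W \<Longrightarrow> A *v x \<in> W"
    and w: "w \<in> W" "w \<noteq> 0"
  shows "\<exists>x\<in>W. norm x = 1 \<and> A *v x = (x \<bullet> (A *v x)) *\<^sub>R x"
proof -
  define S where "S = W \<inter> sphere 0 1"
  have "compact S" unfolding S_def
    by (intro closed_Int_compact closed_subspace W compact_sphere)
  moreover have "w /\<^sub>R norm w \<in> S" using w W unfolding S_def
    by (simp add: subspace_scale)
  moreover have "continuous_on S (\<lambda>x. x \<bullet> (A *v x))"
    by (intro continuous_intros linear_continuous_on linear_linear[THEN iffD1] matrix_vector_mul_linear)
  ultimately obtain x0 where x0: "x0 \<in> S" and mx: "\<And>y. y \<in> S \<Longrightarrow> y \<bullet> (A *v y) \<le> x0 \<bullet> (A *v x0)"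
    using continuous_attains_sup[of S "\<lambda>x. x \<bullet> (A *v x)"] by blast
  define mu where "mu = x0 \<bullet> (A *v x0)"
  have x0W: "x0 \<in> W" and nx0: "norm x0 = 1" using x0 by (auto simp: S_def)
  have q: "y \<bullet> (A *v y) \<le> mu * (y \<bullet> y)" if "y \<in> W" for y
  proof (cases "y = 0")
    case True then show ?thesis by simp
  next
    case False
    have "y /\<^sub>R norm y \<in> S" using False that W unfolding S_def by (simp add: subspace_scale)
    then have "(y /\<^sub>R norm y) \<bullet> (A *v (y /\<^sub>R norm y)) \<le> mu" using mx mu_def by blast
    then have "(y \<bullet> (A *v y)) / (norm y)^2 \<le> mu"
      by (simp add: matrix_vector_mult_scaleR power2_eq_square divide_inverse mult.commute mult.left_commute)
    then show ?thesis using False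
      by (simp add: divide_le_eq power2_norm_eq_inner mult.commute)
  qed
  define z where "z = A *v x0 - mu *\<^sub>R x0"
  have zW: "z \<in> W" unfolding z_def using x0W inv W by (simp add: subspace_diff subspace_scale)
  have x0x0: "x0 \<bullet> x0 = 1" using nx0 by (metis norm_eq_1)
  have "2 * t * (z \<bullet> z) + t^2 * (z \<bullet> (A *v z) - mu * (z \<bullet> z)) \<le> 0" for t
  proof -
    have "x0 + t *\<^sub>R z \<in> W" using x0W zW W by (simp add: subspace_add subspace_scale)
    from q[OF this] have e1: "(x0 + t *\<^sub>R z) \<bullet> (A *v (x0 + t *\<^sub>R z)) \<le> mu * ((x0 + t *\<^sub>R z) \<bullet> (x0 + t *\<^sub>R z))" .
    have h: "x0 \<bullet> (A *v z) = z \<bullet> (A *v x0)" using sym_inner[OF sym, of x0 z] by (simp add: inner_commute)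
    have e2: "(x0 + t *\<^sub>R z) \<bullet> (A *v (x0 + t *\<^sub>R z)) = mu + 2 * t * (z \<bullet> (A *v x0)) + t^2 * (z \<bullet> (A *v z))"
      unfolding matrix_vector_right_distrib matrix_vector_mult_scaleR inner_add_left inner_add_right inner_scaleR_left inner_scaleR_right h
      by (simp add: mu_def power2_eq_square algebra_simps)
    have e3: "(x0 + t *\<^sub>R z) \<bullet> (x0 + t *\<^sub>R z) = 1 + 2 * t * (z \<bullet> x0) + t^2 * (z \<bullet> z)"
      unfolding inner_add_left inner_add_right inner_scaleR_left inner_scaleR_right using x0x0
      by (simp add: inner_commute[of x0 z] power2_eq_square algebra_simps)
    have e4: "z \<bullet> (A *v x0) = z \<bullet> z + mu * (z \<bullet> x0)"
      unfolding z_def by (simp add: inner_diff_left inner_diff_right inner_commute right_diff_distrib)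
    have e5: "mu * (1 + 2 * t * (z \<bullet> x0) + t^2 * (z \<bullet> z)) = mu + 2 * t * (mu * (z \<bullet> x0)) + t^2 * (mu * (z \<bullet> z))"
      by (simp add: algebra_simps)
    have e6: "2 * t * (z \<bullet> (A *v x0)) = 2 * t * (z \<bullet> z) + 2 * t * (mu * (z \<bullet> x0))"
      unfolding e4 by (simp add: algebra_simps)
    have e7: "t^2 * (z \<bullet> (A *v z) - mu * (z \<bullet> z)) = t^2 * (z \<bullet> (A *v z)) - t^2 * (mu * (z \<bullet> z))"
      by (simp add: algebra_simps)
    have e8: "mu * ((x0 + t *\<^sub>R z) \<bullet> (x0 + t *\<^sub>R z)) = mu * (1 + 2 * t * (z \<bullet> x0) + t^2 * (z \<bullet> z))"
      by (simp only: e3)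
    show ?thesis using e1 e2 e8 e5 e6 e7 by linarith
  qed
  then have "z \<bullet> z = 0" by (intro quad_le0) auto
  then have "z = 0" by simp
  then show ?thesis using x0W nx0 unfolding z_def mu_def by auto
qed



lemma onb_collapse:
  fixes B :: "('a::real_inner) set"
  assumes "finite B" "pairwise orthogonal B" "b \<in> B" "norm b = 1"
  shows "b \<bullet> (\<Sum>b'\<in>B. c b' *\<^sub>R b') = c b"
proof -
  have "b \<bullet> (\<Sum>b'\<in>B. c b' *\<^sub>R b') = (\<Sum>b'\<in>B. c b' * (b \<bullet> b'))"
    by (simp add: inner_sum_right)
  also have "\<dots> = c b * (b \<bullet> b) + (\<Sum>b'\<in>B - {b}. c b' * (b \<bullet> b'))"
    using assms by (simp add: sum.remove)
  also have "(\<Sum>b'\<in>B - {b}. c b' * (b \<bullet> b')) = 0"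
    using assms(2,3) by (intro sum.neutral) (auto simp: pairwise_def orthogonal_def)
  also have "b \<bullet> b = 1" using assms(4) by (metis norm_eq_1)
  finally show ?thesis by simp
qed

lemma onb_inner:
  fixes B :: "('a::real_inner) set"
  assumes "finite B" "pairwise orthogonal B" "\<forall>b\<in>B. norm b = 1"
  shows "(\<Sum>b\<in>B. c b *\<^sub>R b) \<bullet> (\<Sum>b\<in>B. d b *\<^sub>R b) = (\<Sum>b\<in>B. c b * d b)"
  using assms by (simp add: inner_sum_left onb_collapse)

lemma eigenbasis:
  fixes A :: "real^'n^'n"
  assumes sym: "transpose A = A"
  shows "\<exists>B. finite B \<and> (\<forall>b\<in>B. norm b = 1 \<and> A *v b = (b \<bullet> (A *v b)) *\<^sub>R b) \<and> pairwise orthogonal B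
            \<and> (\<forall>y. y = (\<Sum>b\<in>B. (b \<bullet> y) *\<^sub>R b))"
proof -
  define P where "P B \<longleftrightarrow> finite B \<and> (\<forall>b\<in>B. norm b = 1 \<and> A *v b = (b \<bullet> (A *v b)) *\<^sub>R b) \<and> pairwise orthogonal B" for B
  have bound: "card B \<le> DIM(real^'n)" if "P B" for B
  proof -
    have "0 \<notin> B" using that unfolding P_def by (metis norm_zero zero_neq_one)
    then have "independent B" using that unfolding P_def by (metis pairwise_orthogonal_independent)
    then show ?thesis using independent_bound by blast
  qed
  have "P {}" unfolding P_def by simp
  have ex: "\<exists>x. (\<exists>B. P B \<and> card B = x) \<and> (\<forall>y. (\<exists>B. P B \<and> card B = y) \<longrightarrow> y \<le> x)"
  proof (rule Nat.ex_has_greatest_nat[where k=0 and b="DIM(real^'n)"])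
    show "\<exists>B. P B \<and> card B = 0" using \<open>P {}\<close> by (intro exI[of _ "{}"]) simp
    show "\<forall>y. (\<exists>B. P B \<and> card B = y) \<longrightarrow> y \<le> DIM(real^'n)" using bound by blast
  qed
  then obtain c where c: "\<exists>B. P B \<and> card B = c" and cmax: "\<And>c'. (\<exists>B. P B \<and> card B = c') \<Longrightarrow> c' \<le> c"
    by blast
  then obtain B where PB: "P B" and cB: "card B = c" by blast
  have fin: "finite B" and eig: "\<forall>b\<in>B. norm b = 1 \<and> A *v b = (b \<bullet> (A *v b)) *\<^sub>R b"
    and orth: "pairwise orthogonal B" using PB unfolding P_def by auto
  have "y = (\<Sum>b\<in>B. (b \<bullet> y) *\<^sub>R b)" for y
  proof (rule ccontr)
    assume ne: "y \<noteq> (\<Sum>b\<in>B. (b \<bullet> y) *\<^sub>R b)"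
    define W where "W = {x. \<forall>b\<in>B. b \<bullet> x = 0}"
    have W: "subspace W" unfolding W_def subspace_def by (simp add: inner_add_right)
    have inv: "A *v x \<in> W" if "x \<in> W" for x
    proof -
      have "b \<bullet> (A *v x) = 0" if "b \<in> B" for b
      proof -
        have "b \<bullet> (A *v x) = (A *v b) \<bullet> x" by (rule sym_inner[OF sym])
        also have "\<dots> = (b \<bullet> (A *v b)) * (b \<bullet> x)" using eig that by (metis inner_scaleR_left)
        also have "b \<bullet> x = 0" using \<open>x \<in> W\<close> that unfolding W_def by blast
        finally show ?thesis by simp
      qed
      then show ?thesis unfolding W_def by blast
    qed
    define w where "w = y - (\<Sum>b\<in>B. (b \<bullet> y) *\<^sub>R b)"
    have wW: "w \<in> W" unfolding W_def w_def
    proof (intro CollectI ballI)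
      fix b assume b: "b \<in> B"
      have "b \<bullet> (\<Sum>b\<in>B. (b \<bullet> y) *\<^sub>R b) = b \<bullet> y"
        using onb_collapse[OF fin orth b, of "\<lambda>b. b \<bullet> y"] eig b by blast
      then show "b \<bullet> (y - (\<Sum>b\<in>B. (b \<bullet> y) *\<^sub>R b)) = 0" by (simp only: inner_diff_right)
    qed
    have w0: "w \<noteq> 0" using ne unfolding w_def by simp
    obtain x0 where x0: "x0 \<in> W" "norm x0 = 1" "A *v x0 = (x0 \<bullet> (A *v x0)) *\<^sub>R x0"
      using eig_in_subspace[OF sym W inv wW w0] by blast
    have x0B: "x0 \<notin> B"
    proof
      assume "x0 \<in> B"
      then have "x0 \<bullet> x0 = 0" using x0(1) unfolding W_def by blast
      then show False using x0(2) by simp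
    qed
    have po: "pairwise orthogonal (insert x0 B)"
    proof -
      have "orthogonal x0 b \<and> orthogonal b x0" if "b \<in> B" for b
      proof -
        have "b \<bullet> x0 = 0" using x0(1) that unfolding W_def by blast
        then show ?thesis unfolding orthogonal_def by (simp add: inner_commute)
      qed
      then show ?thesis unfolding pairwise_insert using orth by blast
    qed
    have "P (insert x0 B)" unfolding P_def using fin eig x0(2,3) po by simp
    moreover have "card (insert x0 B) = c + 1" using fin x0B cB by simp
    ultimately have "c + 1 \<le> c" using cmax by blast
    then show False by simp
  qed
  then show ?thesis using fin eig orth by blast
qed


lemma axis_mat_entry:
  fixes A :: "real^'n^'n"
  shows "axis i 1 \<bullet> (A *v axis j 1) = A $ i $ j"
  by (simp add: matrix_vector_mult_basis inner_axis' column_def)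

theorem lemma10:
  fixes p :: real and E :: "'n::finite \<Rightarrow> 'n \<Rightarrow> bool"
  assumes "0 < p" and "p \<le> 1"
    and "simple_graph E"
  shows "lambda1 (M_mat p E) \<ge> theta2 E"
proof -
  define A where "A = M_mat p E"
  have Esym: "E i j = E j i" for i j using assms(3) unfolding simple_graph_def by blast
  have Aij: "A $ i $ j = (if i = j then 1 else if E i j then (p - 1) / p else 1)" for i j
    unfolding A_def M_mat_def by simp
  have sym: "transpose A = A"
    unfolding transpose_def by (simp add: vec_eq_iff Aij Esym)
  obtain B where fin: "finite B" and eig: "\<forall>b\<in>B. norm b = 1 \<and> A *v b = (b \<bullet> (A *v b)) *\<^sub>R b"
    and orth: "pairwise orthogonal B" and exp: "\<And>y. y = (\<Sum>b\<in>B. (b \<bullet> y) *\<^sub>R b)"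
    using eigenbasis[OF sym] by blast
  define lam where "lam b = b \<bullet> (A *v b)" for b
  have eigb: "A *v b = lam b *\<^sub>R b" if "b \<in> B" for b using eig that unfolding lam_def by blast
  have parseval: "x \<bullet> y = (\<Sum>b\<in>B. (b \<bullet> x) * (b \<bullet> y))" for x y
  proof -
    have "x \<bullet> y = (\<Sum>b\<in>B. (b \<bullet> x) *\<^sub>R b) \<bullet> y" using exp[of x] by simp
    also have "\<dots> = (\<Sum>b\<in>B. (b \<bullet> x) * (b \<bullet> y))" by (simp add: inner_sum_left)
    finally show ?thesis .
  qed
  have bA: "b \<bullet> (A *v y) = lam b * (b \<bullet> y)" if "b \<in> B" for b y
    using sym_inner[OF sym, of b y] eigb[OF that] by simp
  have eigs: "real_eigenvalues A = lam ` B"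
  proof
    show "lam ` B \<subseteq> real_eigenvalues A"
    proof
      fix l assume "l \<in> lam ` B"
      then obtain b where b: "b \<in> B" "l = lam b" by blast
      have "b \<noteq> 0" using eig b by auto
      then show "l \<in> real_eigenvalues A" unfolding real_eigenvalues_def using eigb b by blast
    qed
    show "real_eigenvalues A \<subseteq> lam ` B"
    proof
      fix l assume "l \<in> real_eigenvalues A"
      then obtain v where v: "v \<noteq> 0" "A *v v = l *\<^sub>R v" unfolding real_eigenvalues_def by blast
      have "\<exists>b\<in>B. b \<bullet> v \<noteq> 0"
      proof (rule ccontr)
        assume "\<not> ?thesis"
        then have "v = 0" using exp[of v] by simp
        then show False using v by simp
      qed
      then obtain b where b: "b \<in> B" "b \<bullet> v \<noteq> 0" by blast
      have "lam b * (b \<bullet> v) = l * (b \<bullet> v)" using bA[OF b(1), of v] v(2) by auto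
      then have "l = lam b" using b(2) by simp
      then show "l \<in> lam ` B" using b by blast
    qed
  qed
  define L where "L = Max (lam ` B)"
  have l1: "lambda1 A = L" unfolding lambda1_def eigs L_def ..
  have Bne: "B \<noteq> {}"
  proof
    assume "B = {}"
    then have "axis undefined (1::real) = (0::real^'n)" using exp[of "axis undefined 1"] by simp
    then show False by (simp add: axis_eq_0_iff)
  qed
  have lamL: "lam b \<le> L" if "b \<in> B" for b unfolding L_def using fin that by simp
  have key: "(\<Sum>b\<in>B. lam b * (b \<bullet> axis i 1) * (b \<bullet> axis j 1)) = A $ i $ j" for i j
  proof -
    have "A $ i $ j = axis i 1 \<bullet> (A *v axis j 1)" by (simp add: axis_mat_entry)
    also have "\<dots> = (\<Sum>b\<in>B. (b \<bullet> axis i 1) * (b \<bullet> (A *v axis j 1)))" by (rule parseval)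
    also have "\<dots> = (\<Sum>b\<in>B. lam b * (b \<bullet> axis i 1) * (b \<bullet> axis j 1))"
      by (intro sum.cong refl) (simp add: bA)
    finally show ?thesis by simp
  qed
  have key0: "(\<Sum>b\<in>B. (b \<bullet> axis i 1) * (b \<bullet> axis j 1)) = (if i = j then 1 else 0)" for i j
    using parseval[of "axis i 1" "axis j 1"] by (auto simp: inner_axis_axis inner_real_def)
  have L1: "L \<ge> 1"
  proof -
    obtain i :: 'n where True by blast
    have "1 = A $ i $ i" by (simp add: Aij)
    also have "\<dots> = (\<Sum>b\<in>B. lam b * (b \<bullet> axis i 1) * (b \<bullet> axis i 1))" by (rule key[symmetric])
    also have "\<dots> \<le> (\<Sum>b\<in>B. L * ((b \<bullet> axis i 1) * (b \<bullet> axis i 1)))"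
      by (intro sum_mono) (simp add: mult.assoc lamL mult_right_mono)
    also have "\<dots> = L" using key0[of i i] by (simp add: sum_distrib_left[symmetric])
    finally show ?thesis .
  qed
  define S where "S = {k. k > 1 \<and> (\<exists>u. rigid_vector_coloring (complement_graph E) k u)}"
  have inS: "k \<in> S" if k: "k > L" for k
  proof -
    have k1: "k > 1" using k L1 by simp
    define u where "u i = (1 / sqrt (k - 1)) *\<^sub>R (\<Sum>b\<in>B. (sqrt (k - lam b) * (b \<bullet> axis i 1)) *\<^sub>R b)" for i
    have uu: "u i \<bullet> u j = ((if i = j then k else 0) - A $ i $ j) / (k - 1)" for i j
    proof -
      have "u i \<bullet> u j = (1 / (k - 1)) * (\<Sum>b\<in>B. (sqrt (k - lam b) * (b \<bullet> axis i 1)) * (sqrt (k - lam b) * (b \<bullet> axis j 1)))"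
        unfolding u_def using k1 by (simp add: onb_inner[OF fin orth] eig real_sqrt_mult[symmetric] del: real_sqrt_mult)
      also have "(\<Sum>b\<in>B. (sqrt (k - lam b) * (b \<bullet> axis i 1)) * (sqrt (k - lam b) * (b \<bullet> axis j 1)))
          = (\<Sum>b\<in>B. k * ((b \<bullet> axis i 1) * (b \<bullet> axis j 1)) - lam b * (b \<bullet> axis i 1) * (b \<bullet> axis j 1))"
      proof (intro sum.cong refl)
        fix b assume "b \<in> B"
        then have "k - lam b \<ge> 0" using lamL[of b] k by simp
        then have "sqrt (k - lam b) * sqrt (k - lam b) = k - lam b" by simp
        then show "(sqrt (k - lam b) * (b \<bullet> axis i 1)) * (sqrt (k - lam b) * (b \<bullet> axis j 1))
          = k * ((b \<bullet> axis i 1) * (b \<bullet> axis j 1)) - lam b * (b \<bullet> axis i 1) * (b \<bullet> axis j 1)"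
          by (metis (no_types, lifting) left_diff_distrib mult.assoc mult.left_commute)
      qed
      also have "\<dots> = (if i = j then k else 0) - A $ i $ j"
        by (simp add: sum_subtractf sum_distrib_left[symmetric] key key0)
      finally show ?thesis by simp
    qed
    have "rigid_vector_coloring (complement_graph E) k u"
      unfolding rigid_vector_coloring_def
    proof (intro conjI allI impI)
      fix i
      have "u i \<bullet> u i = 1" using uu[of i i] k1 by (simp add: Aij)
      then show "norm (u i) = 1" by (simp add: norm_eq_sqrt_inner)
    next
      fix i j assume "i \<noteq> j" "complement_graph E i j"
      then show "u i \<bullet> u j = - 1 / (k - 1)" using uu[of i j] by (simp add: Aij complement_graph_def)
    next
      fix i j assume ij: "i \<noteq> j" "\<not> complement_graph E i j"
      then have "E i j" by (simp add: complement_graph_def)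
      then have "u i \<bullet> u j = (1 - p) / p / (k - 1)" using uu[of i j] ij by (simp add: Aij minus_divide_left)
      moreover have "(1 - p) / p / (k - 1) \<ge> 0" using assms(1,2) k1 by simp
      moreover have "- 1 / (k - 1) \<le> 0" using k1 by simp
      ultimately show "u i \<bullet> u j \<ge> - 1 / (k - 1)" by linarith
    qed
    then show ?thesis unfolding S_def using k1 by blast
  qed
  have bdd: "bdd_below S" unfolding S_def by (rule bdd_belowI[of _ 1]) auto
  have "Inf S \<le> L"
  proof (rule dense_ge)
    fix k assume "L < k"
    then show "Inf S \<le> k" using inS bdd by (intro cInf_lower)
  qed
  then show ?thesis unfolding theta2_def theta2_bar_def S_def[symmetric] l1[unfolded A_def] .
qed

end
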